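(* Let $G$ be a cubic graph with $fn(G)=2$, and let $(G,o)$ and $(G,o')$ be two orientations of $G$ such that every edge of $G$ is deletable in $(G,o)$ or in $(G,o')$. Then: 1. every vertex has at least one incoming and at least one outgoing edge in $(G,o')$; 2. if $uv\notin D(G,o)$, then the two edges incident with $u$ other than $uv$ are oriented one into $u$ and one out of $u$ in $(G,o')$; 3. if $uv,vw\notin D(G,o)$ (with $u\neq w$), then in $(G,o')$ these edges are oriented either as $u\to v$, $w\to v$ or as $v\to u$, $v\to w$.
   Context: An orientation is strong if for every ordered pair of distinct vertices $u,v$ there is a directed $uv$-path. An edge $e$ is deletable in an orientation $(G,o)$ if the restriction of $o$ to $E(G)\setminus\{e\}$ is a strong orientation of $G-e$. $D(G,o)$ denotes the set of edges deletable in $(G,o)$. For a $3$-edge-connected graph $G$, $fn(G)$ is the minimum number $k$ such that $G$ admits $k$ orientations with every edge deletable in at least one of them. *)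

theory Defs
  imports Main
begin

definition graph :: "'a set \<Rightarrow> 'a set set \<Rightarrow> bool" where
  "graph V E \<longleftrightarrow> finite V \<and>
     (\<forall>e\<in>E. \<exists>u v. u \<noteq> v \<and> u \<in> V \<and> v \<in> V \<and> e = {u, v})"

definition cubic :: "'a set \<Rightarrow> 'a set set \<Rightarrow> bool" where
  "cubic V E \<longleftrightarrow> graph V E \<and> (\<forall>v\<in>V. card {e\<in>E. v \<in> e} = 3)"

definition connected_graph :: "'a set \<Rightarrow> 'a set set \<Rightarrow> bool" where
  "connected_graph V E \<longleftrightarrow>
     (\<forall>u\<in>V. \<forall>v\<in>V. (u, v) \<in> {(x, y). {x, y} \<in> E}\<^sup>*)"

definition edge_connected :: "nat \<Rightarrow> 'a set \<Rightarrow> 'a set set \<Rightarrow> bool" where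
  "edge_connected k V E \<longleftrightarrow>
     (\<forall>F. F \<subseteq> E \<and> card F < k \<longrightarrow> connected_graph V (E - F))"

definition orientation :: "'a set \<Rightarrow> 'a set set \<Rightarrow> ('a \<times> 'a) set \<Rightarrow> bool" where
  "orientation V E A \<longleftrightarrow>
     (\<forall>(u, v)\<in>A. {u, v} \<in> E) \<and>
     (\<forall>u v. {u, v} \<in> E \<longrightarrow> ((u, v) \<in> A \<longleftrightarrow> (v, u) \<notin> A))"

definition strong :: "'a set \<Rightarrow> ('a \<times> 'a) set \<Rightarrow> bool" where
  "strong V A \<longleftrightarrow> (\<forall>u\<in>V. \<forall>v\<in>V. u \<noteq> v \<longrightarrow> (u, v) \<in> A\<^sup>+)"

definition restrict_or :: "('a \<times> 'a) set \<Rightarrow> 'a set \<Rightarrow> ('a \<times> 'a) set" where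
  "restrict_or A e = {(u, v). (u, v) \<in> A \<and> {u, v} \<noteq> e}"

definition deletable :: "'a set \<Rightarrow> 'a set set \<Rightarrow> ('a \<times> 'a) set \<Rightarrow> 'a set \<Rightarrow> bool" where
  "deletable V E A e \<longleftrightarrow> e \<in> E \<and> strong V (restrict_or A e)"

definition D :: "'a set \<Rightarrow> 'a set set \<Rightarrow> ('a \<times> 'a) set \<Rightarrow> 'a set set" where
  "D V E A = {e \<in> E. deletable V E A e}"

text \<open>Frank number (meaningful for 3-edge-connected graphs).\<close>
definition fn :: "'a set \<Rightarrow> 'a set set \<Rightarrow> nat" where
  "fn V E = (LEAST k. \<exists>os :: nat \<Rightarrow> ('a \<times> 'a) set.
      (\<forall>i<k. orientation V E (os i)) \<and> (\<forall>e\<in>E. \<exists>i<k. e \<in> D V E (os i)))"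

end

theory Submission
  imports Defs
begin

lemma nbr_card:
  assumes c: "cubic V E" and v: "v \<in> V"
  shows "card {a. {v,a} \<in> E} = 3" "finite {a. {v,a} \<in> E}"
proof -
  have g: "graph V E" and c3: "card {e\<in>E. v \<in> e} = 3" using c v by (auto simp: cubic_def)
  have fV: "finite V" using g by (simp add: graph_def)
  have sub: "{a. {v,a} \<in> E} \<subseteq> V" using g by (auto simp: graph_def doubleton_eq_iff)
  show f: "finite {a. {v,a} \<in> E}" using sub fV finite_subset by blast
  have img: "{e\<in>E. v \<in> e} = (\<lambda>a. {v,a}) ` {a. {v,a} \<in> E}"
  proof
    show "{e\<in>E. v \<in> e} \<subseteq> (\<lambda>a. {v,a}) ` {a. {v,a} \<in> E}"
    proof
      fix e assume "e \<in> {e\<in>E. v \<in> e}"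
      then have "e \<in> E" "v \<in> e" by auto
      then obtain x y where "e = {x,y}" using g by (auto simp: graph_def)
      with \<open>v\<in>e\<close> \<open>e\<in>E\<close> show "e \<in> (\<lambda>a. {v,a}) ` {a. {v,a} \<in> E}"
        by (auto simp: insert_commute)
    qed
  qed auto
  have inj: "inj_on (\<lambda>a. {v,a}) {a. {v,a} \<in> E}"
    by (auto simp: inj_on_def doubleton_eq_iff)
  show "card {a. {v,a} \<in> E} = 3" using c3 img card_image[OF inj] by simp
qed

lemma nbr_in_V:
  assumes c: "cubic V E" and "{u,v} \<in> E"
  shows "u \<in> V" "v \<in> V" "u \<noteq> v"
  using assms by (auto simp: cubic_def graph_def doubleton_eq_iff)

lemma three_nbrs:
  assumes c: "cubic V E" and v: "v \<in> V"
    and "{v,a} \<in> E" "{v,b} \<in> E" "{v,c} \<in> E" "{v,d} \<in> E"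
    and "a \<noteq> b" "a \<noteq> c" "b \<noteq> c"
  shows "d = a \<or> d = b \<or> d = c"
proof (rule ccontr)
  assume "\<not> ?thesis"
  then have "{a,b,c,d} \<subseteq> {a. {v,a} \<in> E}" "card {a,b,c,d} = 4" using assms by auto
  then have "4 \<le> card {a. {v,a} \<in> E}" using card_mono nbr_card[OF c v] by metis
  then show False using nbr_card[OF c v] by simp
qed

lemma strong_in_out:
  assumes "strong V A" "v \<in> V" "w \<in> V" "w \<noteq> v"
  shows "\<exists>a. (a,v) \<in> A" "\<exists>b. (v,b) \<in> A"
proof -
  have "(w,v) \<in> A\<^sup>+" "(v,w) \<in> A\<^sup>+" using assms by (auto simp: strong_def)
  then show "\<exists>a. (a,v) \<in> A" "\<exists>b. (v,b) \<in> A"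
    by (auto dest: tranclD tranclD2)
qed

lemma has_nbr:
  assumes c: "cubic V E" and v: "v \<in> V"
  shows "\<exists>w. {v,w} \<in> E"
proof -
  have "{a. {v,a} \<in> E} \<noteq> {}" using nbr_card[OF c v] by (metis card.empty zero_neq_numeral)
  then show ?thesis by auto
qed

lemma del_in_out:
  assumes c: "cubic V E" and o: "orientation V E A" and e: "{u,v} \<in> E"
    and s: "strong V (restrict_or A {u,v})"
  shows "\<exists>a. (a,u) \<in> A \<and> a \<noteq> v \<and> {u,a} \<in> E" "\<exists>b. (u,b) \<in> A \<and> b \<noteq> v \<and> {u,b} \<in> E"
proof -
  have uv: "u \<in> V" "v \<in> V" "u \<noteq> v" using nbr_in_V[OF c e] by auto
  obtain a where a: "(a,u) \<in> restrict_or A {u,v}" using strong_in_out[OF s uv(1) uv(2)] uv(3) by auto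
  obtain b where b: "(u,b) \<in> restrict_or A {u,v}" using strong_in_out[OF s uv(1) uv(2)] uv(3) by auto
  have "(a,u) \<in> A" "a \<noteq> v" using a by (auto simp: restrict_or_def insert_commute)
  moreover have "{u,a} \<in> E" using \<open>(a,u) \<in> A\<close> o by (auto simp: orientation_def insert_commute)
  ultimately show "\<exists>a. (a,u) \<in> A \<and> a \<noteq> v \<and> {u,a} \<in> E" by blast
  have "(u,b) \<in> A" "b \<noteq> v" using b by (auto simp: restrict_or_def)
  moreover have "{u,b} \<in> E" using \<open>(u,b) \<in> A\<close> o by (auto simp: orientation_def)
  ultimately show "\<exists>b. (u,b) \<in> A \<and> b \<noteq> v \<and> {u,b} \<in> E" by blast
qed

theorem mainTheorem12:
  fixes V :: "'a set" and E :: "'a set set" and o1 o2 :: "('a \<times> 'a) set"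
  assumes "cubic V E"
    and "edge_connected 3 V E"
    and "fn V E = 2"
    and "orientation V E o1" and "orientation V E o2"
    and "\<forall>e\<in>E. e \<in> D V E o1 \<or> e \<in> D V E o2"
  shows "(\<forall>v\<in>V. (\<exists>u. (u, v) \<in> o2) \<and> (\<exists>w. (v, w) \<in> o2))
    \<and> (\<forall>u v x y. {u, v} \<in> E \<and> {u, v} \<notin> D V E o1 \<and>
          {u, x} \<in> E \<and> {u, y} \<in> E \<and> x \<noteq> v \<and> y \<noteq> v \<and> x \<noteq> y \<longrightarrow>
          ((x, u) \<in> o2 \<and> (u, y) \<in> o2) \<or> ((y, u) \<in> o2 \<and> (u, x) \<in> o2))
    \<and> (\<forall>u v w. {u, v} \<in> E \<and> {v, w} \<in> E \<and> u \<noteq> w \<and>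
          {u, v} \<notin> D V E o1 \<and> {v, w} \<notin> D V E o1 \<longrightarrow>
          ((u, v) \<in> o2 \<and> (w, v) \<in> o2) \<or> ((v, u) \<in> o2 \<and> (v, w) \<in> o2))"
proof -
  note c = assms(1) and o1 = assms(4) and o2 = assms(5) and cov = assms(6)
  have inD2: "strong V (restrict_or o2 e)" if "e \<in> E" "e \<notin> D V E o1" for e
    using cov that by (auto simp: D_def deletable_def)
  have P1: "(\<exists>u. (u, v) \<in> o2) \<and> (\<exists>w. (v, w) \<in> o2)" if v: "v \<in> V" for v
  proof (rule ccontr)
    assume nio: "\<not> ((\<exists>u. (u, v) \<in> o2) \<and> (\<exists>w. (v, w) \<in> o2))"
    obtain w where w: "{v,w} \<in> E" using has_nbr[OF c v] by auto
    have wv: "w \<in> V" "w \<noteq> v" using nbr_in_V[OF c w] by auto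
    have "e \<in> D V E o1" if "e \<in> E" for e
    proof (rule ccontr)
      assume "e \<notin> D V E o1"
      then have "strong V (restrict_or o2 e)" using inD2 that by blast
      from strong_in_out[OF this v wv] nio show False by (auto simp: restrict_or_def)
    qed
    then have "\<exists>os :: nat \<Rightarrow> ('a \<times> 'a) set.
      (\<forall>i<1. orientation V E (os i)) \<and> (\<forall>e\<in>E. \<exists>i<1. e \<in> D V E (os i))"
      using o1 by (intro exI[of _ "\<lambda>_. o1"]) auto
    then have "fn V E \<le> 1" unfolding fn_def by (rule Least_le)
    with assms(3) show False by simp
  qed
  have P2: "((x, u) \<in> o2 \<and> (u, y) \<in> o2) \<or> ((y, u) \<in> o2 \<and> (u, x) \<in> o2)"
    if h: "{u, v} \<in> E" "{u, v} \<notin> D V E o1" "{u, x} \<in> E" "{u, y} \<in> E" "x \<noteq> v" "y \<noteq> v" "x \<noteq> y"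
    for u v x y
  proof -
    have s: "strong V (restrict_or o2 {u,v})" using inD2 h by blast
    obtain a where a: "(a,u) \<in> o2" "a \<noteq> v" "{u,a} \<in> E" using del_in_out[OF c o2 h(1) s] by blast
    obtain b where b: "(u,b) \<in> o2" "b \<noteq> v" "{u,b} \<in> E" using del_in_out[OF c o2 h(1) s] by blast
    have uV: "u \<in> V" using nbr_in_V[OF c h(1)] by auto
    have "a = x \<or> a = y" using three_nbrs[OF c uV h(1) h(3) h(4) a(3)] h a by auto
    moreover have "b = x \<or> b = y" using three_nbrs[OF c uV h(1) h(3) h(4) b(3)] h b by auto
    moreover have "a \<noteq> b" using a b o2 by (auto simp: orientation_def)
    ultimately show ?thesis using a b by auto
  qed
  have P3: "((u, v) \<in> o2 \<and> (w, v) \<in> o2) \<or> ((v, u) \<in> o2 \<and> (v, w) \<in> o2)"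
    if h: "{u, v} \<in> E" "{v, w} \<in> E" "u \<noteq> w" "{u, v} \<notin> D V E o1" "{v, w} \<notin> D V E o1" for u v w
  proof (rule ccontr)
    assume nh: "\<not> ?thesis"
    have e1: "{v,u} \<in> E" using h(1) by (simp add: insert_commute)
    have or1: "(u,v) \<in> o2 \<longleftrightarrow> (v,u) \<notin> o2" "(v,w) \<in> o2 \<longleftrightarrow> (w,v) \<notin> o2"
      using o2 h by (auto simp: orientation_def)
    have s1: "strong V (restrict_or o2 {v,u})" using inD2 h by (simp add: insert_commute)
    have s2: "strong V (restrict_or o2 {v,w})" using inD2 h by blast
    have vV: "v \<in> V" using nbr_in_V[OF c h(2)] by auto
    have uv: "u \<noteq> v" "v \<noteq> w" using nbr_in_V[OF c h(1)] nbr_in_V[OF c h(2)] by auto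
    obtain a1 where a1: "(a1,v) \<in> o2" "a1 \<noteq> u" "{v,a1} \<in> E" using del_in_out[OF c o2 e1 s1] by blast
    obtain b1 where b1: "(v,b1) \<in> o2" "b1 \<noteq> u" "{v,b1} \<in> E" using del_in_out[OF c o2 e1 s1] by blast
    obtain a2 where a2: "(a2,v) \<in> o2" "a2 \<noteq> w" "{v,a2} \<in> E" using del_in_out[OF c o2 h(2) s2] by blast
    obtain b2 where b2: "(v,b2) \<in> o2" "b2 \<noteq> w" "{v,b2} \<in> E" using del_in_out[OF c o2 h(2) s2] by blast
    have ab: "(x,v) \<in> o2 \<Longrightarrow> (v,x) \<in> o2 \<Longrightarrow> False" for x
      using o2 by (auto simp: orientation_def)
    show False
    proof (cases "(u,v) \<in> o2")
      case True
      then have "(v,w) \<in> o2" using nh or1 by auto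
      have "a1 \<noteq> w" using a1 \<open>(v,w) \<in> o2\<close> ab by blast
      have "b2 \<noteq> u" using b2 True ab by blast
      have "a1 \<noteq> b2" using a1 b2 ab by blast
      have "b2 = u \<or> b2 = w \<or> b2 = a1"
        using three_nbrs[OF c vV e1 h(2) a1(3) b2(3)] uv a1 \<open>a1 \<noteq> w\<close> h(3) by auto
      then show False using \<open>b2 \<noteq> u\<close> b2(2) \<open>a1 \<noteq> b2\<close> by auto
    next
      case False
      then have vu: "(v,u) \<in> o2" using or1 by auto
      then have "(w,v) \<in> o2" using nh or1 by auto
      have "b1 \<noteq> w" using b1 \<open>(w,v) \<in> o2\<close> ab by blast
      have "a2 \<noteq> u" using a2 vu ab by blast
      have "a2 \<noteq> b1" using a2 b1 ab by blast
      have "a2 = u \<or> a2 = w \<or> a2 = b1"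
        using three_nbrs[OF c vV e1 h(2) b1(3) a2(3)] uv b1 \<open>b1 \<noteq> w\<close> h(3) by auto
      then show False using \<open>a2 \<noteq> u\<close> a2(2) \<open>a2 \<noteq> b1\<close> by auto
    qed
  qed
  show ?thesis using P1 P2 P3 by blast
qed

end
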